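(* Let $Z$ have a continuous distribution with density $f$ and finite expectation, and run GBPA with the stochastically smoothed potential $\tilde\Phi$ with perturbation $Z$ on a gain sequence $g_1,\dots,g_T\in[-1,0]^N$. For each round $t$, with $p_t = \nabla\tilde\Phi(\hat G_{t-1})$, $\operatorname{supp}(p_t)=\{i : p_{t,i}>0\}$, and $\hat L_{-i} = \max_{j\ne i}(\hat G_{t-1,j} + Z_j)$ (with $Z_1,\dots,Z_N$ i.i.d. copies of $Z$), $$\mathbb{E}\big[D_{\tilde\Phi}(\hat G_t,\hat G_{t-1}) \,\big|\, i_1,\dots,i_{t-1}\big] = \sum_{i\in\operatorname{supp}(p_t)} p_{t,i}\int_0^{|g_{t,i}/p_{t,i}|} \mathbb{E}_{\hat L_{-i}}\Big[\int_0^s f(\hat L_{-i} - \hat G_{t-1,i} + r)\,dr\Big]\,ds.$$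
   Context: Adversarial multi-armed bandit: $N$ arms, $T$ rounds; an oblivious adversary fixes $g_1,\dots,g_T \in [-1,0]^N$ in advance. The stochastically smoothed potential is $\tilde\Phi(G) = \mathbb{E}[\max_{i}(G_i + Z_i)]$ for $G\in\mathbb{R}^N$; it is convex and differentiable with $\nabla_i\tilde\Phi(G) = \mathbb{P}(i = \arg\max_j (G_j+Z_j))$. GBPA$(\tilde\Phi)$: $\hat G_0 = 0$; for $t=1,\dots,T$: $p_t = \nabla\tilde\Phi(\hat G_{t-1})$, draw $i_t \sim p_t$, observe only $g_{t,i_t}$, set $\hat g_t = \frac{g_{t,i_t}}{p_{t,i_t}} e_{i_t}$, $\hat G_t = \hat G_{t-1} + \hat g_t$. Bregman divergence: $D_{\tilde\Phi}(x,y) = \tilde\Phi(x)-\tilde\Phi(y)-\langle\nabla\tilde\Phi(y), x-y\rangle$. *)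

theory Defs
  imports "HOL-Probability.Probability"
begin

text \<open>Arms are indexed by 0..N-1; vectors in R^N are functions nat => real
  (only coordinates below N matter). Rounds are indexed 1..T.\<close>

definition Zdist :: "nat \<Rightarrow> (real \<Rightarrow> real) \<Rightarrow> (nat \<Rightarrow> real) measure" where
  "Zdist N f = PiM {..<N} (\<lambda>_. density lborel (\<lambda>x. ennreal (f x)))"

definition Phi :: "nat \<Rightarrow> (real \<Rightarrow> real) \<Rightarrow> (nat \<Rightarrow> real) \<Rightarrow> real" where
  "Phi N f G = (\<integral>z. Max ((\<lambda>j. G j + z j) ` {..<N}) \<partial>Zdist N f)"

definition gradPhi :: "nat \<Rightarrow> (real \<Rightarrow> real) \<Rightarrow> (nat \<Rightarrow> real) \<Rightarrow> nat \<Rightarrow> real" where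
  "gradPhi N f G i = deriv (\<lambda>x. Phi N f (G(i := x))) (G i)"

definition Breg :: "nat \<Rightarrow> (real \<Rightarrow> real) \<Rightarrow> (nat \<Rightarrow> real) \<Rightarrow> (nat \<Rightarrow> real) \<Rightarrow> real" where
  "Breg N f x y = Phi N f x - Phi N f y - (\<Sum>j<N. gradPhi N f y j * (x j - y j))"

definition gbpa_step :: "nat \<Rightarrow> (real \<Rightarrow> real) \<Rightarrow> (nat \<Rightarrow> nat \<Rightarrow> real) \<Rightarrow> nat
    \<Rightarrow> (nat \<Rightarrow> real) \<Rightarrow> nat \<Rightarrow> (nat \<Rightarrow> real)" where
  "gbpa_step N f g t G i = G(i := G i + g t i / gradPhi N f G i)"

fun Ghat_aux :: "nat \<Rightarrow> (real \<Rightarrow> real) \<Rightarrow> (nat \<Rightarrow> nat \<Rightarrow> real) \<Rightarrow> nat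
    \<Rightarrow> nat list \<Rightarrow> (nat \<Rightarrow> real) \<Rightarrow> (nat \<Rightarrow> real)" where
  "Ghat_aux N f g t [] G = G"
| "Ghat_aux N f g t (i # is) G = Ghat_aux N f g (Suc t) is (gbpa_step N f g t G i)"

text \<open>Cumulative estimated gain after the history i_1,...,i_k of drawn arms (starting from 0).\<close>
definition Ghat :: "nat \<Rightarrow> (real \<Rightarrow> real) \<Rightarrow> (nat \<Rightarrow> nat \<Rightarrow> real) \<Rightarrow> nat list \<Rightarrow> (nat \<Rightarrow> real)" where
  "Ghat N f g hist = Ghat_aux N f g 1 hist (\<lambda>_. 0)"

definition Lminus :: "nat \<Rightarrow> (nat \<Rightarrow> real) \<Rightarrow> nat \<Rightarrow> (nat \<Rightarrow> real) \<Rightarrow> real" where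
  "Lminus N G i z = Max ((\<lambda>j. G j + z j) ` ({..<N} - {i}))"

end

theory Submission
  imports Defs
begin


locale smooth =
  fixes N :: nat and f :: "real \<Rightarrow> real" and G :: "nat \<Rightarrow> real" and i :: nat
  assumes N2: "N \<ge> 2" and iN: "i < N" and f_meas[measurable]: "f \<in> borel_measurable borel"
    and f_nonneg: "\<And>x. f x \<ge> 0"
    and f_prob: "prob_space (density lborel (\<lambda>x. ennreal (f x)))"
    and mean: "integrable (density lborel (\<lambda>x. ennreal (f x))) (\<lambda>x. x)"
begin

abbreviation "M \<equiv> density lborel (\<lambda>x. ennreal (f x))"
abbreviation "Z \<equiv> Zdist N f"
definition "L w = Lminus N G i w"
definition "D w = G i + w i - L w"

lemma probZ: "prob_space Z"
  unfolding Zdist_def by (rule prob_space_PiM) (rule f_prob)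

lemma intconstZ: "integrable Z (\<lambda>_. c::real)"
proof - interpret prob_space Z by (rule probZ) show ?thesis by simp qed

lemma intconstM: "integrable M (\<lambda>_. c::real)"
proof - interpret prob_space M by (rule f_prob) show ?thesis by simp qed

lemma psf: "product_sigma_finite (\<lambda>_. M)"
  unfolding product_sigma_finite_def using f_prob prob_space_imp_sigma_finite by blast

lemma comp_meas[measurable]: "j < N \<Longrightarrow> (\<lambda>w. w j) \<in> borel_measurable Z"
  unfolding Zdist_def by measurable

lemma L_meas[measurable]: "L \<in> borel_measurable Z"
  unfolding L_def Lminus_def by measurable

lemma comp_int: "j < N \<Longrightarrow> integrable Z (\<lambda>w. w j)"
proof -
  interpret product_sigma_finite "\<lambda>_. M" by (rule psf)
  assume j: "j < N"
  have "integrable Z (\<lambda>w. \<Prod>k\<in>{..<N}. (if k = j then w k else 1))"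
    unfolding Zdist_def
    apply (rule product_integrable_prod)
     apply simp
    subgoal for k by (cases "k = j") (simp_all add: mean intconstM)
    done
  moreover have "(\<Prod>k\<in>{..<N}. (if k = j then w k else 1)) = w j" for w :: "nat \<Rightarrow> real"
    using j by (simp add: prod.delta)
  ultimately show ?thesis by simp
qed

lemma S_ne: "{..<N} - {i} \<noteq> {}"
proof -
  have "(if i = 0 then 1 else 0) \<in> {..<N} - {i}" using N2 by auto
  then show ?thesis by blast
qed

lemma Max_rew: "Max ((\<lambda>j. (G(i:=u)) j + w j) ` {..<N}) = max (u + w i) (L w)"
proof -
  have I: "insert i ({..<N} - {i}) = {..<N}" using iN by auto
  have "(\<lambda>j. (G(i:=u)) j + w j) ` (insert i ({..<N} - {i})) = insert (u + w i) ((\<lambda>j. G j + w j) ` ({..<N} - {i}))"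
    by (simp only: image_insert) (auto intro!: image_cong)
  then have e: "(\<lambda>j. (G(i:=u)) j + w j) ` {..<N} = insert (u + w i) ((\<lambda>j. G j + w j) ` ({..<N} - {i}))"
    by (simp only: I)
  show ?thesis unfolding e L_def Lminus_def using S_ne by (subst Max_insert) auto
qed

lemma L_bound: "\<bar>L w\<bar> \<le> (\<Sum>j<N. \<bar>G j\<bar> + \<bar>w j\<bar>)"
proof -
  have "L w \<in> (\<lambda>j. G j + w j) ` ({..<N} - {i})"
    unfolding L_def Lminus_def using S_ne by (intro Max_in) auto
  then obtain k where k: "k < N" "L w = G k + w k" by auto
  have "\<bar>L w\<bar> \<le> \<bar>G k\<bar> + \<bar>w k\<bar>" using k by simp
  also have "\<dots> \<le> (\<Sum>j<N. \<bar>G j\<bar> + \<bar>w j\<bar>)"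
    using k by (intro member_le_sum) auto
  finally show ?thesis .
qed

lemma sum_int: "integrable Z (\<lambda>w. \<Sum>j<N. \<bar>G j\<bar> + \<bar>w j\<bar>)"
  by (intro Bochner_Integration.integrable_sum Bochner_Integration.integrable_add Bochner_Integration.integrable_abs comp_int intconstZ) auto

lemma m_int: "integrable Z (\<lambda>w. max (u + w i) (L w))"
proof (rule Bochner_Integration.integrable_bound[OF Bochner_Integration.integrable_add[OF Bochner_Integration.integrable_add[OF intconstZ[of "\<bar>u\<bar>"] Bochner_Integration.integrable_abs[OF comp_int[OF iN]]] sum_int]])
  show "(\<lambda>w. max (u + w i) (L w)) \<in> borel_measurable Z" using iN by measurable
  show "AE x in Z. norm (max (u + x i) (L x)) \<le> norm (\<bar>u\<bar> + \<bar>x i\<bar> + (\<Sum>j<N. \<bar>G j\<bar> + \<bar>x j\<bar>))"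
  proof (rule AE_I2)
    fix x
    have "0 \<le> (\<Sum>j<N. \<bar>G j\<bar> + \<bar>x j\<bar>)" by (intro sum_nonneg) auto
    have a: "\<bar>max (u + x i) (L x)\<bar> \<le> \<bar>u\<bar> + \<bar>x i\<bar> + \<bar>L x\<bar>"
      by (smt (verit))
    then show "norm (max (u + x i) (L x)) \<le> norm (\<bar>u\<bar> + \<bar>x i\<bar> + (\<Sum>j<N. \<bar>G j\<bar> + \<bar>x j\<bar>))"
      using L_bound[of x] \<open>0 \<le> _\<close> unfolding real_norm_def by linarith
  qed
qed

end

context smooth begin

lemma L_upd: "L (x(i:=y)) = L x"
  unfolding L_def Lminus_def by (intro arg_cong[where f=Max] image_cong) auto

lemma M_single: "emeasure M {c} = 0"
proof -
  have "{c} \<in> null_sets M"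
  proof -
    have "AE x in lborel. x \<in> {c} \<longrightarrow> ennreal (f x) = 0"
      using AE_lborel_singleton[of c] by eventually_elim auto
    then show ?thesis by (subst null_sets_density_iff) auto
  qed
  then show ?thesis by (rule null_setsD1)
qed

lemma D_meas[measurable]: "D \<in> borel_measurable Z"
  unfolding D_def using iN by measurable

lemma AE_D: "AE w in Z. D w \<noteq> 0"
proof -
  interpret product_sigma_finite "\<lambda>_. M" by (rule psf)
  have I: "insert i ({..<N} - {i}) = {..<N}" using iN by auto
  have Zeq: "Z = PiM (insert i ({..<N} - {i})) (\<lambda>_. M)" unfolding Zdist_def I ..
  have "{w\<in>space Z. D w \<noteq> 0} \<in> sets Z" by measurable
  moreover have "(\<integral>\<^sup>+ w. indicator {w. \<not> D w \<noteq> 0} w \<partial>Z) = 0"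
  proof -
    have "(\<integral>\<^sup>+ w. indicator {w. \<not> D w \<noteq> 0} w \<partial>Z)
      = (\<integral>\<^sup>+ x. (\<integral>\<^sup>+ y. indicator {w. \<not> D w \<noteq> 0} (x(i:=y)) \<partial>M) \<partial>(PiM ({..<N} - {i}) (\<lambda>_. M)))"
      unfolding Zeq
    proof (rule product_nn_integral_insert)
      have "(\<lambda>w. of_bool (\<not> D w \<noteq> 0) :: ennreal) \<in> borel_measurable Z" by measurable
      then show "indicator {w. \<not> D w \<noteq> 0} \<in> borel_measurable (PiM (insert i ({..<N} - {i})) (\<lambda>_. M))"
        unfolding Zeq[symmetric] by (simp add: indicator_def[abs_def])
    qed auto
    also have "\<dots> = (\<integral>\<^sup>+ x. (\<integral>\<^sup>+ y. indicator {L x - G i} y \<partial>M) \<partial>(PiM ({..<N} - {i}) (\<lambda>_. M)))"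
      by (intro nn_integral_cong) (auto simp: D_def L_upd indicator_def)
    also have "\<dots> = 0" by (simp add: M_single)
    finally show ?thesis .
  qed
  ultimately show ?thesis by (simp add: AE_iff_nn_integral)
qed

definition "psi = (\<integral>w. (if 0 < D w then 1 else 0::real) \<partial>Z)"

lemma phi_eq: "Phi N f (G(i:=u)) = (\<integral>w. max (u + w i) (L w) \<partial>Z)"
  unfolding Phi_def Max_rew ..

lemma max_lip: "\<bar>max (x + c) l - max (y + c) l\<bar> \<le> \<bar>x - y\<bar>" for x y c l :: real
  by (smt (verit))

lemma deriv_phi: "DERIV (\<lambda>u. Phi N f (G(i:=u))) (G i) :> psi"
  unfolding has_field_derivative_iff tendsto_at_iff_sequentially
proof (intro allI impI)
  fix X :: "nat \<Rightarrow> real"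
  assume Xne: "\<forall>n. X n \<in> UNIV - {G i}" and X: "X \<longlonglongrightarrow> G i"
  define s where "s n w = (max (X n + w i) (L w) - max (G i + w i) (L w)) / (X n - G i)" for n w
  have eq: "(Phi N f (G(i:=X n)) - Phi N f (G(i:=G i))) / (X n - G i) = (\<integral>w. s n w \<partial>Z)" for n
    unfolding phi_eq s_def by (simp add: Bochner_Integration.integral_diff[OF m_int m_int])
  have lim: "(\<lambda>n. \<integral>w. s n w \<partial>Z) \<longlonglongrightarrow> (\<integral>w. (if 0 < D w then 1 else 0) \<partial>Z)"
  proof (rule integral_dominated_convergence[where w="\<lambda>_. 1"])
    show "(\<lambda>w. if 0 < D w then 1 else 0::real) \<in> borel_measurable Z" by measurable
    show "s n \<in> borel_measurable Z" for n unfolding s_def using iN by measurable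
    show "integrable Z (\<lambda>_. 1::real)" by (rule intconstZ)
    show "AE w in Z. norm (s n w) \<le> 1" for n
    proof (rule AE_I2)
      fix w
      have "X n - G i \<noteq> 0" using Xne by auto
      then show "norm (s n w) \<le> 1"
        unfolding s_def using max_lip[of "X n" "w i" "L w" "G i"]
        by (simp add: abs_divide divide_le_eq_1)
    qed
    show "AE w in Z. (\<lambda>n. s n w) \<longlonglongrightarrow> (if 0 < D w then 1 else 0)"
      using AE_D
    proof eventually_elim
      fix w assume Dw: "D w \<noteq> 0"
      then have "0 < \<bar>D w\<bar>" by simp
      with X have ev: "\<forall>\<^sub>F n in sequentially. dist (X n) (G i) < \<bar>D w\<bar>"
        by (rule tendstoD)
      show "(\<lambda>n. s n w) \<longlonglongrightarrow> (if 0 < D w then 1 else 0)"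
      proof (rule Lim_transform_eventually[OF tendsto_const])
        show "\<forall>\<^sub>F n in sequentially. (if 0 < D w then 1 else 0) = s n w"
          using ev
        proof eventually_elim
          fix n assume d: "dist (X n) (G i) < \<bar>D w\<bar>"
          have ne: "X n - G i \<noteq> 0" using Xne by auto
          show "(if 0 < D w then 1 else 0) = s n w"
          proof (cases "0 < D w")
            case True
            then have "max (X n + w i) (L w) = X n + w i" "max (G i + w i) (L w) = G i + w i"
              using d unfolding D_def dist_real_def by auto
            then show ?thesis using True ne unfolding s_def by simp
          next
            case False
            then have "max (X n + w i) (L w) = L w" "max (G i + w i) (L w) = L w"
              using d Dw unfolding D_def dist_real_def by auto
            then show ?thesis using False unfolding s_def by simp
          qed
        qed
      qed
    qed
  qed
  show "((\<lambda>y. (Phi N f (G(i := y)) - Phi N f (G(i := G i))) / (y - G i)) \<circ> X) \<longlonglongrightarrow> psi"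
    unfolding comp_def eq psi_def by (rule lim)
qed

lemma grad_eq: "gradPhi N f G i = psi"
  unfolding gradPhi_def by (rule DERIV_imp_deriv[OF deriv_phi])

lemma psi_nonneg: "psi \<ge> 0"
  unfolding psi_def by (intro Bochner_Integration.integral_nonneg_AE) auto

end

context smooth begin

definition "T w s = (if 0 < D w \<and> D w < s then 1 else 0::real)"

lemma T_meas[measurable]: "(\<lambda>(s,w). T w s) \<in> borel_measurable (lborel \<Otimes>\<^sub>M Z)"
  unfolding T_def by measurable

lemma pos_part_int:
  fixes d a :: real assumes a: "0 \<le> a"
  shows "(\<integral>s. indicator {0<..<a} s * (if 0 < d \<and> d < s then 1 else 0) \<partial>lborel)
     = max (d - a) 0 - max d 0 + a * (if 0 < d then 1 else 0)"
proof (cases "0 < d \<and> d < a")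
  case True
  have "(\<lambda>s. indicator {0<..<a} s * (if 0 < d \<and> d < s then 1 else 0::real)) = indicator {d<..<a}"
    using True by (auto simp: indicator_def fun_eq_iff)
  then show ?thesis using True by simp
next
  case False
  have "(\<lambda>s. indicator {0<..<a} s * (if 0 < d \<and> d < s then 1 else 0::real)) = (\<lambda>_. 0)"
    using False by (auto simp: indicator_def fun_eq_iff)
  then show ?thesis using False a by auto
qed

lemma indD_int: "integrable Z (\<lambda>w. if 0 < D w then 1 else 0::real)"
proof -
  interpret prob_space Z by (rule probZ)
  show ?thesis by (rule integrable_const_bound[where B=1]) auto
qed

lemma breg_V:
  assumes h: "h \<le> 0"
  shows "Breg N f (G(i := G i + h)) G = (\<integral>w. (\<integral>s. indicator {0<..<-h} s * T w s \<partial>lborel) \<partial>Z)"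
proof -
  have "(\<Sum>j<N. gradPhi N f G j * ((G(i := G i + h)) j - G j)) = (\<Sum>j<N. if j = i then gradPhi N f G i * h else 0)"
    by (intro sum.cong) auto
  also have "\<dots> = psi * h" using iN grad_eq by simp
  finally have sm: "(\<Sum>j<N. gradPhi N f G j * ((G(i := G i + h)) j - G j)) = psi * h" .
  have P0: "Phi N f G = (\<integral>w. max (G i + w i) (L w) \<partial>Z)" using phi_eq[of "G i"] by simp
  have "Breg N f (G(i := G i + h)) G = (\<integral>w. max (G i + h + w i) (L w) \<partial>Z) - (\<integral>w. max (G i + w i) (L w) \<partial>Z) - h * (\<integral>w. (if 0 < D w then 1 else 0::real) \<partial>Z)"
    unfolding Breg_def sm P0 phi_eq psi_def by simp
  also have "\<dots> = (\<integral>w. max (G i + h + w i) (L w) - max (G i + w i) (L w) - h * (if 0 < D w then 1 else 0::real) \<partial>Z)"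
  proof -
    have e1: "(\<integral>w. max (G i + h + w i) (L w) - max (G i + w i) (L w) - h * (if 0 < D w then 1 else 0::real) \<partial>Z)
      = (\<integral>w. max (G i + h + w i) (L w) - max (G i + w i) (L w) \<partial>Z) - (\<integral>w. h * (if 0 < D w then 1 else 0::real) \<partial>Z)"
      by (rule Bochner_Integration.integral_diff[OF Bochner_Integration.integrable_diff[OF m_int m_int] Bochner_Integration.integrable_mult_right[OF indD_int]])
    have e2: "(\<integral>w. max (G i + h + w i) (L w) - max (G i + w i) (L w) \<partial>Z) = (\<integral>w. max (G i + h + w i) (L w) \<partial>Z) - (\<integral>w. max (G i + w i) (L w) \<partial>Z)"
      by (rule Bochner_Integration.integral_diff[OF m_int m_int])
    have e3: "(\<integral>w. h * (if 0 < D w then 1 else 0::real) \<partial>Z) = h * (\<integral>w. (if 0 < D w then 1 else 0::real) \<partial>Z)"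
      by (rule integral_mult_right_zero)
    show ?thesis unfolding e1 e2 e3 ..
  qed
  also have "\<dots> = (\<integral>w. (\<integral>s. indicator {0<..<-h} s * T w s \<partial>lborel) \<partial>Z)"
  proof (intro Bochner_Integration.integral_cong refl)
    fix w
    have "max (G i + h + w i) (L w) - max (G i + w i) (L w) - h * (if 0 < D w then 1 else 0::real)
       = max (D w - (-h)) 0 - max (D w) 0 + (-h) * (if 0 < D w then 1 else 0)"
      unfolding D_def max_def by auto
    also have "\<dots> = (\<integral>s. indicator {0<..<-h} s * T w s \<partial>lborel)"
      unfolding T_def using h by (subst pos_part_int) auto
    finally show "max (G i + h + w i) (L w) - max (G i + w i) (L w) - h * (if 0 < D w then 1 else 0::real)
       = (\<integral>s. indicator {0<..<-h} s * T w s \<partial>lborel)" .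
  qed
  finally show ?thesis .
qed

lemma fub:
  assumes a: "0 \<le> a"
  shows "(\<integral>w. (\<integral>s. indicator {0<..<a} s * T w s \<partial>lborel) \<partial>Z)
       = (\<integral>s. indicator {0<..<a} s * (\<integral>w. T w s \<partial>Z) \<partial>lborel)"
proof -
  interpret Zp: prob_space Z by (rule probZ)
  interpret pair_sigma_finite lborel Z
    by (simp add: pair_sigma_finite_def lborel.sigma_finite_measure_axioms prob_space_imp_sigma_finite[OF probZ])
  define F where "F s w = indicator {0<..<a} s * T w s" for s w
  have Fm[measurable]: "(\<lambda>(s,w). F s w) \<in> borel_measurable (lborel \<Otimes>\<^sub>M Z)"
    unfolding F_def T_def by measurable
  have Tb: "0 \<le> T w s \<and> T w s \<le> 1" for w s unfolding T_def by auto
  have int: "integrable (lborel \<Otimes>\<^sub>M Z) (\<lambda>(s,w). F s w)"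
  proof (rule Fubini_integrable)
    show "(\<lambda>(s,w). F s w) \<in> borel_measurable (lborel \<Otimes>\<^sub>M Z)" by (rule Fm)
    show "integrable lborel (\<lambda>s. \<integral>w. norm (case (s, w) of (s, w) \<Rightarrow> F s w) \<partial>Z)"
    proof (rule Bochner_Integration.integrable_bound[where f="indicator {0<..<a}"])
      show "integrable lborel (indicator {0<..<a} :: real \<Rightarrow> real)"
        using a by (intro integrable_real_indicator) (auto simp: emeasure_lborel_Ioo)
      show "(\<lambda>s. \<integral>w. norm (case (s, w) of (s, w) \<Rightarrow> F s w) \<partial>Z) \<in> borel_measurable lborel"
        by measurable
      show "AE s in lborel. norm (\<integral>w. norm (case (s, w) of (s, w) \<Rightarrow> F s w) \<partial>Z) \<le> norm (indicator {0<..<a} s :: real)"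
      proof (rule AE_I2)
        fix s
        have "(\<integral>w. norm (case (s, w) of (s, w) \<Rightarrow> F s w) \<partial>Z) = indicator {0<..<a} s * (\<integral>w. T w s \<partial>Z)"
          unfolding F_def using Tb by (simp add: abs_mult)
        moreover have "0 \<le> (\<integral>w. T w s \<partial>Z)" using Tb by (intro Bochner_Integration.integral_nonneg) auto
        moreover have "(\<integral>w. T w s \<partial>Z) \<le> 1"
          using Tb by (intro Zp.integral_le_const Zp.integrable_const_bound[where B=1]) (auto simp: T_def)
        ultimately show "norm (\<integral>w. norm (case (s, w) of (s, w) \<Rightarrow> F s w) \<partial>Z) \<le> norm (indicator {0<..<a} s :: real)"
          by (auto simp: indicator_def)
      qed
    qed
    show "AE s in lborel. integrable Z (\<lambda>w. case (s, w) of (s, w) \<Rightarrow> F s w)"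
    proof (rule AE_I2)
      fix s
      show "integrable Z (\<lambda>w. case (s, w) of (s, w) \<Rightarrow> F s w)"
        by (rule Zp.integrable_const_bound[where B=1]) (auto simp: F_def T_def indicator_def)
    qed
  qed
  have "(\<integral>w. (\<integral>s. F s w \<partial>lborel) \<partial>Z) = (\<integral>s. (\<integral>w. F s w \<partial>Z) \<partial>lborel)"
    by (rule Fubini_integral[OF int])
  then show ?thesis unfolding F_def by simp
qed

end

context smooth begin

lemma einterval0: "einterval 0 (ereal s) = {0<..<s}"
  by (auto simp: einterval_def)

lemma K1:
  assumes s: "0 \<le> s"
  shows "(LBINT r=0..s. f (c + r)) = measure M {c<..<c+s}"
proof -
  have "(LBINT r=0..s. f (c + r)) = (\<integral>r. indicator {0<..<s} r * f (c + r) \<partial>lborel)"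
    using s unfolding interval_lebesgue_integral_def set_lebesgue_integral_def einterval0 by simp
  also have "\<dots> = (\<integral>r. (\<lambda>x. indicator {c<..<c+s} x * f x) (c + r) \<partial>lborel)"
    by (intro Bochner_Integration.integral_cong) (auto simp: indicator_def)
  also have "\<dots> = (\<integral>x. indicator {c<..<c+s} x * f x \<partial>distr lborel borel ((+) c))"
    by (rule integral_distr[symmetric]) auto
  also have "\<dots> = (\<integral>x. indicator {c<..<c+s} x * f x \<partial>lborel)"
    by (simp add: lborel_distr_plus)
  also have "\<dots> = (\<integral>x. f x *\<^sub>R indicator {c<..<c+s} x \<partial>lborel)"
    by (simp add: mult.commute)
  also have "\<dots> = (\<integral>x. indicator {c<..<c+s} x \<partial>M)"
    by (rule integral_density[symmetric]) (auto simp: f_nonneg)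
  also have "\<dots> = measure M {c<..<c+s}" by simp
  finally show ?thesis .
qed

lemma Kf_meas:
  assumes s: "0 < s"
  shows "(\<lambda>c. measure M {c<..<c+s}) \<in> borel_measurable borel"
proof -
  interpret Mp: prob_space M by (rule f_prob)
  define F1 where "F1 t = measure M {..<t}" for t
  define F2 where "F2 t = measure M {..t}" for t
  have m1[measurable]: "F1 \<in> borel_measurable borel"
    unfolding F1_def by (rule borel_measurable_mono) (auto simp: mono_def intro!: Mp.finite_measure_mono)
  have m2[measurable]: "F2 \<in> borel_measurable borel"
    unfolding F2_def by (rule borel_measurable_mono) (auto simp: mono_def intro!: Mp.finite_measure_mono)
  have eq: "measure M {c<..<c+s} = F1 (c + s) - F2 c" for c
  proof -
    have "{c<..<c+s} = {..<c+s} - {..c}" by auto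
    moreover have "{..c} \<subseteq> {..<c+s}" using s by auto
    ultimately show ?thesis unfolding F1_def F2_def by (simp add: Mp.finite_measure_Diff)
  qed
  show ?thesis unfolding eq by measurable
qed

lemma T_K:
  assumes s: "0 < s"
  shows "(\<integral>w. T w s \<partial>Z) = (\<integral>w. (LBINT r=0..s. f (L w - G i + r)) \<partial>Z)"
proof -
  interpret product_sigma_finite "\<lambda>_. M" by (rule psf)
  interpret Mp: prob_space M by (rule f_prob)
  interpret Zp: prob_space Z by (rule probZ)
  have I: "insert i ({..<N} - {i}) = {..<N}" using iN by auto
  have Zeq: "Z = PiM (insert i ({..<N} - {i})) (\<lambda>_. M)" unfolding Zdist_def I ..
  have Km: "(\<lambda>w. measure M {L w - G i<..<L w - G i + s}) \<in> borel_measurable Z"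
    by (rule measurable_compose[OF _ Kf_meas[OF s]]) measurable
  have eqK: "(LBINT r=0..s. f (L w - G i + r)) = measure M {L w - G i<..<L w - G i + s}" for w
    using K1[of s "L w - G i"] s by simp
  have Tm: "(\<lambda>w. T w s) \<in> borel_measurable Z" unfolding T_def by measurable
  have int1: "integrable Z (\<lambda>w. T w s)"
    by (rule Zp.integrable_const_bound[where B=1]) (auto simp: T_def Tm)
  have int2: "integrable Z (\<lambda>w. measure M {L w - G i<..<L w - G i + s})"
    by (rule Zp.integrable_const_bound[where B=1]) (auto simp: Km)
  have A: "(\<integral>w. T w s \<partial>Z) = (\<integral>x. (\<integral>y. T (x(i:=y)) s \<partial>M) \<partial>PiM ({..<N}-{i}) (\<lambda>_. M))"
    unfolding Zeq
  proof (rule product_integral_insert)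
    show "integrable (PiM (insert i ({..<N} - {i})) (\<lambda>_. M)) (\<lambda>w. T w s)"
      using int1 by (simp only: Zeq)
  qed auto
  have B: "(\<integral>w. measure M {L w - G i<..<L w - G i + s} \<partial>Z)
     = (\<integral>x. (\<integral>y. measure M {L (x(i:=y)) - G i<..<L (x(i:=y)) - G i + s} \<partial>M) \<partial>PiM ({..<N}-{i}) (\<lambda>_. M))"
    unfolding Zeq
  proof (rule product_integral_insert)
    show "integrable (PiM (insert i ({..<N} - {i})) (\<lambda>_. M)) (\<lambda>w. measure M {L w - G i<..<L w - G i + s})"
      using int2 by (simp only: Zeq)
  qed auto
  have C: "(\<integral>y. T (x(i:=y)) s \<partial>M) = measure M {L x - G i<..<L x - G i + s}" for x
  proof -
    have "(\<lambda>y. T (x(i:=y)) s) = indicator {L x - G i<..<L x - G i + s}"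
      by (auto simp: T_def D_def L_upd indicator_def fun_eq_iff)
    then show ?thesis by simp
  qed
  have D': "(\<integral>y. measure M {L (x(i:=y)) - G i<..<L (x(i:=y)) - G i + s} \<partial>M) = measure M {L x - G i<..<L x - G i + s}" for x
    using Mp.prob_space by (simp add: L_upd)
  show ?thesis unfolding eqK A B C D' ..
qed

lemma main_i:
  assumes h: "h \<le> 0"
  shows "Breg N f (G(i := G i + h)) G = (LBINT s=0..-h. (\<integral>z. (LBINT r=0..s. f (Lminus N G i z - G i + r)) \<partial>Z))"
proof -
  have "Breg N f (G(i := G i + h)) G = (\<integral>s. indicator {0<..<-h} s * (\<integral>w. T w s \<partial>Z) \<partial>lborel)"
    using breg_V[OF h] fub[of "-h"] h by simp
  also have "\<dots> = (\<integral>s. indicator {0<..<-h} s * (\<integral>z. (LBINT r=0..s. f (L z - G i + r)) \<partial>Z) \<partial>lborel)"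
    by (intro Bochner_Integration.integral_cong refl) (auto simp: indicator_def T_K)
  also have "\<dots> = (LBINT s=0..-h. (\<integral>z. (LBINT r=0..s. f (Lminus N G i z - G i + r)) \<partial>Z))"
    unfolding interval_lebesgue_integral_def set_lebesgue_integral_def einterval0 L_def using h by simp
  finally show ?thesis .
qed

end

theorem lemma3:
  fixes N T t :: nat and f :: "real \<Rightarrow> real" and g :: "nat \<Rightarrow> nat \<Rightarrow> real"
    and hist :: "nat list"
  assumes N2: "N \<ge> 2"
    and f_meas: "f \<in> borel_measurable borel"
    and f_nonneg: "\<And>x. f x \<ge> 0"
    and f_prob: "prob_space (density lborel (\<lambda>x. ennreal (f x)))"
    and Z_finite_mean: "integrable (density lborel (\<lambda>x. ennreal (f x))) (\<lambda>x. x)"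
    and gains: "\<And>s i. 1 \<le> s \<Longrightarrow> s \<le> T \<Longrightarrow> i < N \<Longrightarrow> -1 \<le> g s i \<and> g s i \<le> 0"
    and t_range: "1 \<le> t" "t \<le> T"
    and hist_len: "length hist = t - 1"
    and hist_arms: "\<forall>k < length hist. hist ! k < N"
    and hist_pos: "\<forall>k < length hist. gradPhi N f (Ghat N f g (take k hist)) (hist ! k) > 0"
  shows "(let G = Ghat N f g hist; p = gradPhi N f G in
           (\<Sum>i<N. p i * Breg N f (gbpa_step N f g t G i) G)
         = (\<Sum>i\<in>{i. i < N \<and> p i > 0}. p i *
              (LBINT s=0..\<bar>g t i / p i\<bar>.
                 (\<integral>z. (LBINT r=0..s. f (Lminus N G i z - G i + r)) \<partial>Zdist N f))))"
proof -
  define G where "G = Ghat N f g hist"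
  define p where "p = gradPhi N f G"
  have sm: "smooth N f i" if "i < N" for i
    by (rule smooth.intro[OF N2 that f_meas f_nonneg f_prob Z_finite_mean])
  have pnn: "p i \<ge> 0" if "i < N" for i
  proof -
    interpret smooth N f G i by (rule sm[OF that])
    show ?thesis unfolding p_def grad_eq by (rule psi_nonneg)
  qed
  have "(\<Sum>i<N. p i * Breg N f (gbpa_step N f g t G i) G)
      = (\<Sum>i\<in>{i. i < N \<and> p i > 0}. p i * Breg N f (gbpa_step N f g t G i) G)"
  proof (rule sum.mono_neutral_right)
    show "\<forall>i\<in>{..<N} - {i. i < N \<and> 0 < p i}. p i * Breg N f (gbpa_step N f g t G i) G = 0"
    proof
      fix i assume "i \<in> {..<N} - {i. i < N \<and> 0 < p i}"
      then have i1: "i < N" and i2: "\<not> 0 < p i" by auto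
      have "p i = 0" using pnn[OF i1] i2 by linarith
      then show "p i * Breg N f (gbpa_step N f g t G i) G = 0" by simp
    qed
  qed auto
  also have "\<dots> = (\<Sum>i\<in>{i. i < N \<and> p i > 0}. p i *
              (LBINT s=0..\<bar>g t i / p i\<bar>.
                 (\<integral>z. (LBINT r=0..s. f (Lminus N G i z - G i + r)) \<partial>Zdist N f)))"
  proof (rule sum.cong[OF refl])
    fix i assume "i \<in> {i. i < N \<and> p i > 0}"
    then have iN: "i < N" and pp: "p i > 0" by auto
    interpret smooth N f G i by (rule sm[OF iN])
    have gle: "g t i \<le> 0" using gains[OF t_range iN] by simp
    define h where "h = g t i / p i"
    have h0: "h \<le> 0" unfolding h_def using gle pp by (simp add: divide_nonpos_pos)
    have st: "gbpa_step N f g t G i = G(i := G i + h)" unfolding gbpa_step_def h_def p_def ..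
    have ab: "\<bar>g t i / p i\<bar> = - h" unfolding h_def[symmetric] using h0 by simp
    show "p i * Breg N f (gbpa_step N f g t G i) G = p i *
              (LBINT s=0..\<bar>g t i / p i\<bar>.
                 (\<integral>z. (LBINT r=0..s. f (Lminus N G i z - G i + r)) \<partial>Zdist N f))"
      unfolding st ab main_i[OF h0] ..
  qed
  finally show ?thesis unfolding Let_def G_def[symmetric] p_def[symmetric] .
qed

end
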